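(* Let $\beta$ be a complex number with $\beta\neq 0$ and $\beta\neq 1$, and let $Q_\beta$ be the unital associative complex algebra generated by $a_1^-,a_2^-,a_1^+,a_2^+$ subject to the relations $$a_i^-a_j^-=0,\qquad a_i^+a_j^+=0\qquad (i,j\in\{1,2\}),$$ $$a_1^-a_1^++a_2^-a_2^++\beta a_1^+a_1^-+\beta a_2^+a_2^-=1 .$$ Define $$N_1=\frac{\beta}{\beta-1}\left(a_1^-a_1^++\beta a_1^+a_1^-\right)+\beta a_2^+a_2^-,\qquad N_2=-\frac{\beta}{\beta-1}\left(a_1^-a_1^++a_1^+a_1^-\right).$$ Then for all $i,j\in\{1,2\}$, $$[N_i,a_j^\pm]=\pm\delta_{ij}\,a_j^\pm,$$ where $[x,y]=xy-yx$. Consequently $Q_\beta$ is a number operator algebra of type $2$ with number operators $N_1,N_2$; moreover it is quadratic, and symmetric (exchanging the indices $1$ and $2$ of the generators induces an automorphism of $Q_\beta$).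
   Context: A number operator algebra (NOA) of type $n$ is an algebra generated by $a_1^-,\dots,a_n^-,a_1^+,\dots,a_n^+$, equipped with an involution exchanging $a_i^-$ and $a_i^+$, together with $n$ elements $N_1,\dots,N_n$ of the algebra satisfying $[N_i,a_j^\pm]=\pm\delta_{ij}a_j^\pm$ for all $i,j$. A NOA is called quadratic if its defining relations between the generators have degree at most two, and symmetric if every permutation of the indices of the generators induces an automorphism of the algebra. On $Q_\beta$ the involution is the conjugate-linear anti-automorphism exchanging $a_i^-$ and $a_i^+$ (for real $\beta$ it preserves the defining relations). *)

theory Defs
  imports Complex_Main "HOL-Library.Poly_Mapping"
begin

datatype ix = i1 | i2
datatype gen = Minus ix | Plus ix

text \<open>Words in the generators form a (noncommutative) monoid under concatenation,
  written additively so that the convolution ring structure of Poly_Mapping applies.\<close>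
datatype word = W "gen list"

instantiation word :: monoid_add
begin
definition zero_word :: word where "zero_word = W []"
fun plus_word :: "word \<Rightarrow> word \<Rightarrow> word" where "plus_word (W u) (W v) = W (u @ v)"
instance
proof
  fix a b c :: word
  show "a + b + c = a + (b + c)" by (cases a; cases b; cases c) simp
  show "0 + a = a" by (cases a) (simp add: zero_word_def)
  show "a + 0 = a" by (cases a) (simp add: zero_word_def)
qed
end

text \<open>The free unital associative complex algebra on the four generators:
  finitely supported complex-valued functions on words, with convolution product.\<close>
type_synonym falg = "word \<Rightarrow>\<^sub>0 complex"

definition sc :: "complex \<Rightarrow> falg" where "sc c = Poly_Mapping.single 0 c"
definition am :: "ix \<Rightarrow> falg" where "am i = Poly_Mapping.single (W [Minus i]) 1"
definition ap :: "ix \<Rightarrow> falg" where "ap i = Poly_Mapping.single (W [Plus i]) 1"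

inductive_set two_sided_ideal :: "falg set \<Rightarrow> falg set" for R where
  zero: "0 \<in> two_sided_ideal R"
| gen: "r \<in> R \<Longrightarrow> x * r * y \<in> two_sided_ideal R"
| add: "a \<in> two_sided_ideal R \<Longrightarrow> b \<in> two_sided_ideal R \<Longrightarrow> a + b \<in> two_sided_ideal R"

text \<open>Defining relations of Q_beta (each element r stands for the relation r = 0).\<close>
definition rels :: "complex \<Rightarrow> falg set" where
  "rels \<beta> = {am i * am j | i j. True} \<union> {ap i * ap j | i j. True}
     \<union> {am i1 * ap i1 + am i2 * ap i2 + sc \<beta> * ap i1 * am i1 + sc \<beta> * ap i2 * am i2 - 1}"

definition eqQ :: "complex \<Rightarrow> falg \<Rightarrow> falg \<Rightarrow> bool" where
  "eqQ \<beta> x y \<longleftrightarrow> x - y \<in> two_sided_ideal (rels \<beta>)"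

definition commut :: "falg \<Rightarrow> falg \<Rightarrow> falg" where "commut x y = x * y - y * x"

definition Nop :: "complex \<Rightarrow> ix \<Rightarrow> falg" where
  "Nop \<beta> i = (if i = i1
     then sc (\<beta> / (\<beta> - 1)) * (am i1 * ap i1 + sc \<beta> * ap i1 * am i1) + sc \<beta> * ap i2 * am i2
     else - (sc (\<beta> / (\<beta> - 1)) * (am i1 * ap i1 + ap i1 * am i1)))"

fun swap_ix :: "ix \<Rightarrow> ix" where "swap_ix i1 = i2" | "swap_ix i2 = i1"
fun swap_gen :: "gen \<Rightarrow> gen" where
  "swap_gen (Minus i) = Minus (swap_ix i)" | "swap_gen (Plus i) = Plus (swap_ix i)"
fun swap_word :: "word \<Rightarrow> word" where "swap_word (W u) = W (map swap_gen u)"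
definition fswap :: "falg \<Rightarrow> falg" where
  "fswap p = (\<Sum>u\<in>Poly_Mapping.keys p. Poly_Mapping.single (swap_word u) (Poly_Mapping.lookup p u))"

end

theory Submission
  imports Defs
begin


lemma swap_ix_inv[simp]: "swap_ix (swap_ix i) = i" by (cases i) auto
lemma swap_gen_inv[simp]: "swap_gen (swap_gen g) = g" by (cases g) auto
lemma swap_word_inv[simp]: "swap_word (swap_word w) = w"
  by (cases w) (simp add: comp_def)
lemma swap_word_add: "swap_word (u + v) = swap_word u + swap_word v"
  by (cases u; cases v) simp
lemma swap_word_0[simp]: "swap_word 0 = 0" by (simp add: zero_word_def)

lemma lookup_fswap: "Poly_Mapping.lookup (fswap p) v = Poly_Mapping.lookup p (swap_word v)"
proof -
  have "Poly_Mapping.lookup (fswap p) v =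
     (\<Sum>u\<in>Poly_Mapping.keys p. if u = swap_word v then Poly_Mapping.lookup p u else 0)"
    unfolding fswap_def lookup_sum
    by (intro sum.cong refl) (auto simp: Poly_Mapping.lookup_single when_def)
  also have "\<dots> = Poly_Mapping.lookup p (swap_word v)"
    by (simp add: in_keys_iff)
  finally show ?thesis .
qed

lemma fswap_add: "fswap (p + q) = fswap p + fswap q"
  by (rule poly_mapping_eqI) (simp add: lookup_fswap lookup_add)

lemma fswap_0[simp]: "fswap 0 = 0"
  by (rule poly_mapping_eqI) (simp add: lookup_fswap)

lemma fswap_single: "fswap (Poly_Mapping.single u c) = Poly_Mapping.single (swap_word u) c"
  by (rule poly_mapping_eqI) (auto simp: lookup_fswap Poly_Mapping.lookup_single when_def)

lemma update_eq: "a \<notin> Poly_Mapping.keys f \<Longrightarrow> Poly_Mapping.update a b f = f + Poly_Mapping.single a b"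
  by (rule poly_mapping_eqI) (auto simp: lookup_update lookup_add Poly_Mapping.lookup_single when_def in_keys_iff)

lemma fswap_mult_single: "fswap (Poly_Mapping.single a b * q) = Poly_Mapping.single (swap_word a) b * fswap q"
proof (induction q rule: update_induct)
  case const
  then show ?case by simp
next
  case (update f c d)
  then show ?case
    by (simp add: update_eq distrib_left fswap_add mult_single fswap_single swap_word_add)
qed

lemma fswap_mult: "fswap (p * q) = fswap p * fswap q"
proof (induction p rule: update_induct)
  case const
  then show ?case by simp
next
  case (update f c d)
  then show ?case
    by (simp add: update_eq distrib_right fswap_add fswap_mult_single fswap_single)
qed

lemma fswap_one[simp]: "fswap 1 = 1"
  using fswap_single[of 0 1] by simp

lemma fswap_am: "fswap (am i) = am (swap_ix i)"
  by (simp add: am_def fswap_single)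
lemma fswap_ap: "fswap (ap i) = ap (swap_ix i)"
  by (simp add: ap_def fswap_single)
lemma fswap_sc: "fswap (sc c) = sc c"
  by (simp add: sc_def fswap_single)

lemma fswap_uminus: "fswap (- p) = - fswap p"
  by (rule poly_mapping_eqI) (simp add: lookup_fswap)
lemma fswap_diff: "fswap (p - q) = fswap p - fswap q"
  by (rule poly_mapping_eqI) (simp add: lookup_fswap lookup_minus)

lemma fswap_rels:
  assumes "r \<in> rels \<beta>" shows "fswap r \<in> rels \<beta>"
proof -
  from assms consider (a) i j where "r = am i * am j" | (b) i j where "r = ap i * ap j"
    | (c) "r = am i1 * ap i1 + am i2 * ap i2 + sc \<beta> * ap i1 * am i1 + sc \<beta> * ap i2 * am i2 - 1"
    unfolding rels_def by blast
  then show ?thesis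
  proof cases
    case (a i j)
    then show ?thesis by (auto simp: rels_def fswap_mult fswap_am)
  next
    case (b i j)
    then show ?thesis by (auto simp: rels_def fswap_mult fswap_ap)
  next
    case c
    have "fswap r = am i1 * ap i1 + am i2 * ap i2 + sc \<beta> * ap i1 * am i1 + sc \<beta> * ap i2 * am i2 - 1"
      unfolding c by (simp add: fswap_mult fswap_add fswap_diff fswap_am fswap_ap fswap_sc algebra_simps)
    then show ?thesis unfolding rels_def by blast
  qed
qed

lemma fswap_ideal: "x \<in> two_sided_ideal (rels \<beta>) \<Longrightarrow> fswap x \<in> two_sided_ideal (rels \<beta>)"
proof (induction rule: two_sided_ideal.induct)
  case zero
  then show ?case by (simp add: two_sided_ideal.zero)
next
  case (gen r x y)
  then show ?case
    by (simp add: fswap_mult two_sided_ideal.gen fswap_rels)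
next
  case (add a b)
  then show ?case by (simp add: fswap_add two_sided_ideal.add)
qed




definition G :: "gen set" where "G = {Minus i1, Minus i2, Plus i1, Plus i2}"

lemma gen_in_G: "x \<in> G"
  unfolding G_def by (cases x; cases "case x of Minus i \<Rightarrow> i | Plus i \<Rightarrow> i") auto

lemma word_cases:
  fixes k :: word
  obtains "k = W []" | x where "k = W [x]" "x \<in> G" | x y where "k = W [x,y]" "x \<in> G" "y \<in> G"
    | x y z where "k = W [x,y,z]" "x \<in> G" "y \<in> G" "z \<in> G"
    | x y z w u where "k = W (x#y#z#w#u)"
  using gen_in_G by (metis word.exhaust list.exhaust)

lemma lookup_single_W: "Poly_Mapping.lookup (Poly_Mapping.single (W xs) c) (W ys) = (if xs = ys then c else 0)"
  by (simp add: Poly_Mapping.lookup_single when_def)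

lemmas unf = am_def ap_def sc_def commut_def Nop_def
  ring_distribs mult_single single_uminus zero_word_def mult.assoc

definition E :: "complex \<Rightarrow> falg" where
 "E \<beta> = am i1 * ap i1 + am i2 * ap i2 + sc \<beta> * ap i1 * am i1 + sc \<beta> * ap i2 * am i2 - 1"

lemma rels_mem:
  "E \<beta> \<in> rels \<beta>" "am i * am j \<in> rels \<beta>" "ap i * ap j \<in> rels \<beta>"
  by (auto simp: rels_def E_def)

lemma c1_eq:
  assumes "\<beta> \<noteq> 0" "\<beta> \<noteq> 1"
  shows "commut (Nop \<beta> i1) (am i1) - (- am i1) = ((sc (-1) * am i1) * (E \<beta>) * (1)) + ((sc (1)) * (am i1 * am i1) * (ap i1)) + ((sc (1)) * (am i1 * am i2) * (ap i2)) + ((sc ((\<beta>/(\<beta>-1))*\<beta>) * ap i1) * (am i1 * am i1) * (1)) + ((sc (-(\<beta>/(\<beta>-1)))) * (am i1 * am i1) * (ap i1)) + ((sc (\<beta>) * ap i2) * (am i2 * am i1) * (1))"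
proof (rule poly_mapping_eqI)
  fix k :: word
  have b1: "\<beta> - 1 \<noteq> 0" using assms by simp
  have b2: "1 + \<beta>*\<beta> \<noteq> \<beta>*2"
  proof
    assume h: "1 + \<beta>*\<beta> = \<beta>*2"
    have "(\<beta>-1)*(\<beta>-1) = 0" using h by algebra
    then show False using b1 by simp
  qed
  have b3: "\<beta> + \<beta>*(\<beta>*\<beta>) \<noteq> \<beta>*(\<beta>*2)"
  proof
    assume h: "\<beta> + \<beta>*(\<beta>*\<beta>) = \<beta>*(\<beta>*2)"
    have "\<beta>*((\<beta>-1)*(\<beta>-1)) = 0" using h by algebra
    then show False using b1 assms by simp
  qed
  show "Poly_Mapping.lookup (commut (Nop \<beta> i1) (am i1) - (- am i1)) k = Poly_Mapping.lookup (((sc (-1) * am i1) * (E \<beta>) * (1)) + ((sc (1)) * (am i1 * am i1) * (ap i1)) + ((sc (1)) * (am i1 * am i2) * (ap i2)) + ((sc ((\<beta>/(\<beta>-1))*\<beta>) * ap i1) * (am i1 * am i1) * (1)) + ((sc (-(\<beta>/(\<beta>-1)))) * (am i1 * am i1) * (ap i1)) + ((sc (\<beta>) * ap i2) * (am i2 * am i1) * (1))) k"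
    apply (cases k rule: word_cases)
    apply (simp_all add: unf E_def lookup_add lookup_minus lookup_single_W lookup_one)
    apply (auto simp: G_def)?
    apply (simp_all add: divide_simps b1 b2 b3 assms algebra_simps)?
    done
qed

lemma c1:
  assumes "\<beta> \<noteq> 0" "\<beta> \<noteq> 1"
  shows "eqQ \<beta> (commut (Nop \<beta> i1) (am i1)) (- am i1)"
  unfolding eqQ_def c1_eq[OF assms]
  by (intro two_sided_ideal.add two_sided_ideal.gen rels_mem)

lemma c2_eq:
  assumes "\<beta> \<noteq> 0" "\<beta> \<noteq> 1"
  shows "commut (Nop \<beta> i1) (ap i1) - (ap i1) = ((sc (1)) * (E \<beta>) * (ap i1)) + ((sc (-1) * am i1) * (ap i1 * ap i1) * (1)) + ((sc (-1) * am i2) * (ap i2 * ap i1) * (1)) + ((sc ((\<beta>/(\<beta>-1))) * am i1) * (ap i1 * ap i1) * (1)) + ((sc (-(\<beta>/(\<beta>-1))*\<beta>)) * (ap i1 * ap i1) * (am i1)) + ((sc (-\<beta>)) * (ap i1 * ap i2) * (am i2))"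
proof (rule poly_mapping_eqI)
  fix k :: word
  have b1: "\<beta> - 1 \<noteq> 0" using assms by simp
  have b2: "1 + \<beta>*\<beta> \<noteq> \<beta>*2"
  proof
    assume h: "1 + \<beta>*\<beta> = \<beta>*2"
    have "(\<beta>-1)*(\<beta>-1) = 0" using h by algebra
    then show False using b1 by simp
  qed
  have b3: "\<beta> + \<beta>*(\<beta>*\<beta>) \<noteq> \<beta>*(\<beta>*2)"
  proof
    assume h: "\<beta> + \<beta>*(\<beta>*\<beta>) = \<beta>*(\<beta>*2)"
    have "\<beta>*((\<beta>-1)*(\<beta>-1)) = 0" using h by algebra
    then show False using b1 assms by simp
  qed
  show "Poly_Mapping.lookup (commut (Nop \<beta> i1) (ap i1) - (ap i1)) k = Poly_Mapping.lookup (((sc (1)) * (E \<beta>) * (ap i1)) + ((sc (-1) * am i1) * (ap i1 * ap i1) * (1)) + ((sc (-1) * am i2) * (ap i2 * ap i1) * (1)) + ((sc ((\<beta>/(\<beta>-1))) * am i1) * (ap i1 * ap i1) * (1)) + ((sc (-(\<beta>/(\<beta>-1))*\<beta>)) * (ap i1 * ap i1) * (am i1)) + ((sc (-\<beta>)) * (ap i1 * ap i2) * (am i2))) k"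
    apply (cases k rule: word_cases)
    apply (simp_all add: unf E_def lookup_add lookup_minus lookup_single_W lookup_one)
    apply (auto simp: G_def)?
    apply (simp_all add: divide_simps b1 b2 b3 assms algebra_simps)?
    done
qed

lemma c2:
  assumes "\<beta> \<noteq> 0" "\<beta> \<noteq> 1"
  shows "eqQ \<beta> (commut (Nop \<beta> i1) (ap i1)) (ap i1)"
  unfolding eqQ_def c2_eq[OF assms]
  by (intro two_sided_ideal.add two_sided_ideal.gen rels_mem)

lemma c3_eq:
  assumes "\<beta> \<noteq> 0" "\<beta> \<noteq> 1"
  shows "commut (Nop \<beta> i1) (am i2) - (0) = ((sc ((\<beta>/(\<beta>-1)))) * (E \<beta>) * (am i2)) + ((sc (-(\<beta>/(\<beta>-1))) * am i2) * (E \<beta>) * (1)) + ((sc (\<beta>) * ap i2) * (am i2 * am i2) * (1)) + ((sc (-(\<beta>/(\<beta>-1))*\<beta>) * ap i2) * (am i2 * am i2) * (1)) + ((sc ((\<beta>/(\<beta>-1)))) * (am i2 * am i2) * (ap i2))"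
proof (rule poly_mapping_eqI)
  fix k :: word
  have b1: "\<beta> - 1 \<noteq> 0" using assms by simp
  have b2: "1 + \<beta>*\<beta> \<noteq> \<beta>*2"
  proof
    assume h: "1 + \<beta>*\<beta> = \<beta>*2"
    have "(\<beta>-1)*(\<beta>-1) = 0" using h by algebra
    then show False using b1 by simp
  qed
  have b3: "\<beta> + \<beta>*(\<beta>*\<beta>) \<noteq> \<beta>*(\<beta>*2)"
  proof
    assume h: "\<beta> + \<beta>*(\<beta>*\<beta>) = \<beta>*(\<beta>*2)"
    have "\<beta>*((\<beta>-1)*(\<beta>-1)) = 0" using h by algebra
    then show False using b1 assms by simp
  qed
  show "Poly_Mapping.lookup (commut (Nop \<beta> i1) (am i2) - (0)) k = Poly_Mapping.lookup (((sc ((\<beta>/(\<beta>-1)))) * (E \<beta>) * (am i2)) + ((sc (-(\<beta>/(\<beta>-1))) * am i2) * (E \<beta>) * (1)) + ((sc (\<beta>) * ap i2) * (am i2 * am i2) * (1)) + ((sc (-(\<beta>/(\<beta>-1))*\<beta>) * ap i2) * (am i2 * am i2) * (1)) + ((sc ((\<beta>/(\<beta>-1)))) * (am i2 * am i2) * (ap i2))) k"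
    apply (cases k rule: word_cases)
    apply (simp_all add: unf E_def lookup_add lookup_minus lookup_single_W lookup_one)
    apply (auto simp: G_def)?
    apply (simp_all add: divide_simps b1 b2 b3 assms algebra_simps)?
    done
qed

lemma c3:
  assumes "\<beta> \<noteq> 0" "\<beta> \<noteq> 1"
  shows "eqQ \<beta> (commut (Nop \<beta> i1) (am i2)) (0)"
  unfolding eqQ_def c3_eq[OF assms]
  by (intro two_sided_ideal.add two_sided_ideal.gen rels_mem)

lemma c4_eq:
  assumes "\<beta> \<noteq> 0" "\<beta> \<noteq> 1"
  shows "commut (Nop \<beta> i1) (ap i2) - (0) = ((sc ((\<beta>/(\<beta>-1)))) * (E \<beta>) * (ap i2)) + ((sc (-(\<beta>/(\<beta>-1))) * ap i2) * (E \<beta>) * (1)) + ((sc (-(\<beta>/(\<beta>-1))) * am i2) * (ap i2 * ap i2) * (1)) + ((sc ((\<beta>/(\<beta>-1))*\<beta>)) * (ap i2 * ap i2) * (am i2)) + ((sc (-\<beta>)) * (ap i2 * ap i2) * (am i2))"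
proof (rule poly_mapping_eqI)
  fix k :: word
  have b1: "\<beta> - 1 \<noteq> 0" using assms by simp
  have b2: "1 + \<beta>*\<beta> \<noteq> \<beta>*2"
  proof
    assume h: "1 + \<beta>*\<beta> = \<beta>*2"
    have "(\<beta>-1)*(\<beta>-1) = 0" using h by algebra
    then show False using b1 by simp
  qed
  have b3: "\<beta> + \<beta>*(\<beta>*\<beta>) \<noteq> \<beta>*(\<beta>*2)"
  proof
    assume h: "\<beta> + \<beta>*(\<beta>*\<beta>) = \<beta>*(\<beta>*2)"
    have "\<beta>*((\<beta>-1)*(\<beta>-1)) = 0" using h by algebra
    then show False using b1 assms by simp
  qed
  show "Poly_Mapping.lookup (commut (Nop \<beta> i1) (ap i2) - (0)) k = Poly_Mapping.lookup (((sc ((\<beta>/(\<beta>-1)))) * (E \<beta>) * (ap i2)) + ((sc (-(\<beta>/(\<beta>-1))) * ap i2) * (E \<beta>) * (1)) + ((sc (-(\<beta>/(\<beta>-1))) * am i2) * (ap i2 * ap i2) * (1)) + ((sc ((\<beta>/(\<beta>-1))*\<beta>)) * (ap i2 * ap i2) * (am i2)) + ((sc (-\<beta>)) * (ap i2 * ap i2) * (am i2))) k"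
    apply (cases k rule: word_cases)
    apply (simp_all add: unf E_def lookup_add lookup_minus lookup_single_W lookup_one)
    apply (auto simp: G_def)?
    apply (simp_all add: divide_simps b1 b2 b3 assms algebra_simps)?
    done
qed

lemma c4:
  assumes "\<beta> \<noteq> 0" "\<beta> \<noteq> 1"
  shows "eqQ \<beta> (commut (Nop \<beta> i1) (ap i2)) (0)"
  unfolding eqQ_def c4_eq[OF assms]
  by (intro two_sided_ideal.add two_sided_ideal.gen rels_mem)

lemma c5_eq:
  assumes "\<beta> \<noteq> 0" "\<beta> \<noteq> 1"
  shows "commut (Nop \<beta> i2) (am i1) - (0) = ((sc (-(\<beta>/(\<beta>-1))) * ap i1) * (am i1 * am i1) * (1)) + ((sc ((\<beta>/(\<beta>-1)))) * (am i1 * am i1) * (ap i1))"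
proof (rule poly_mapping_eqI)
  fix k :: word
  have b1: "\<beta> - 1 \<noteq> 0" using assms by simp
  have b2: "1 + \<beta>*\<beta> \<noteq> \<beta>*2"
  proof
    assume h: "1 + \<beta>*\<beta> = \<beta>*2"
    have "(\<beta>-1)*(\<beta>-1) = 0" using h by algebra
    then show False using b1 by simp
  qed
  have b3: "\<beta> + \<beta>*(\<beta>*\<beta>) \<noteq> \<beta>*(\<beta>*2)"
  proof
    assume h: "\<beta> + \<beta>*(\<beta>*\<beta>) = \<beta>*(\<beta>*2)"
    have "\<beta>*((\<beta>-1)*(\<beta>-1)) = 0" using h by algebra
    then show False using b1 assms by simp
  qed
  show "Poly_Mapping.lookup (commut (Nop \<beta> i2) (am i1) - (0)) k = Poly_Mapping.lookup (((sc (-(\<beta>/(\<beta>-1))) * ap i1) * (am i1 * am i1) * (1)) + ((sc ((\<beta>/(\<beta>-1)))) * (am i1 * am i1) * (ap i1))) k"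
    apply (cases k rule: word_cases)
    apply (simp_all add: unf E_def lookup_add lookup_minus lookup_single_W lookup_one)
    apply (auto simp: G_def)?
    apply (simp_all add: divide_simps b1 b2 b3 assms algebra_simps)?
    done
qed

lemma c5:
  assumes "\<beta> \<noteq> 0" "\<beta> \<noteq> 1"
  shows "eqQ \<beta> (commut (Nop \<beta> i2) (am i1)) (0)"
  unfolding eqQ_def c5_eq[OF assms]
  by (intro two_sided_ideal.add two_sided_ideal.gen rels_mem)

lemma c6_eq:
  assumes "\<beta> \<noteq> 0" "\<beta> \<noteq> 1"
  shows "commut (Nop \<beta> i2) (ap i1) - (0) = ((sc (-(\<beta>/(\<beta>-1))) * am i1) * (ap i1 * ap i1) * (1)) + ((sc ((\<beta>/(\<beta>-1)))) * (ap i1 * ap i1) * (am i1))"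
proof (rule poly_mapping_eqI)
  fix k :: word
  have b1: "\<beta> - 1 \<noteq> 0" using assms by simp
  have b2: "1 + \<beta>*\<beta> \<noteq> \<beta>*2"
  proof
    assume h: "1 + \<beta>*\<beta> = \<beta>*2"
    have "(\<beta>-1)*(\<beta>-1) = 0" using h by algebra
    then show False using b1 by simp
  qed
  have b3: "\<beta> + \<beta>*(\<beta>*\<beta>) \<noteq> \<beta>*(\<beta>*2)"
  proof
    assume h: "\<beta> + \<beta>*(\<beta>*\<beta>) = \<beta>*(\<beta>*2)"
    have "\<beta>*((\<beta>-1)*(\<beta>-1)) = 0" using h by algebra
    then show False using b1 assms by simp
  qed
  show "Poly_Mapping.lookup (commut (Nop \<beta> i2) (ap i1) - (0)) k = Poly_Mapping.lookup (((sc (-(\<beta>/(\<beta>-1))) * am i1) * (ap i1 * ap i1) * (1)) + ((sc ((\<beta>/(\<beta>-1)))) * (ap i1 * ap i1) * (am i1))) k"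
    apply (cases k rule: word_cases)
    apply (simp_all add: unf E_def lookup_add lookup_minus lookup_single_W lookup_one)
    apply (auto simp: G_def)?
    apply (simp_all add: divide_simps b1 b2 b3 assms algebra_simps)?
    done
qed

lemma c6:
  assumes "\<beta> \<noteq> 0" "\<beta> \<noteq> 1"
  shows "eqQ \<beta> (commut (Nop \<beta> i2) (ap i1)) (0)"
  unfolding eqQ_def c6_eq[OF assms]
  by (intro two_sided_ideal.add two_sided_ideal.gen rels_mem)

lemma c7_eq:
  assumes "\<beta> \<noteq> 0" "\<beta> \<noteq> 1"
  shows "commut (Nop \<beta> i2) (am i2) - (- am i2) = ((sc (-(\<beta>/(\<beta>-1)))) * (E \<beta>) * (am i2)) + ((sc ((\<beta>/(\<beta>-1))*\<beta>) * ap i1) * (am i1 * am i2) * (1)) + ((sc ((\<beta>/(\<beta>-1))*\<beta>) * ap i2) * (am i2 * am i2) * (1)) + ((sc ((\<beta>/(\<beta>-1))/\<beta>) * am i2) * (E \<beta>) * (1)) + ((sc (-(\<beta>/(\<beta>-1))/\<beta>)) * (am i2 * am i1) * (ap i1)) + ((sc (-(\<beta>/(\<beta>-1))/\<beta>)) * (am i2 * am i2) * (ap i2)) + ((sc (-(\<beta>/(\<beta>-1))) * ap i1) * (am i1 * am i2) * (1)) + ((sc ((\<beta>/(\<beta>-1)))) * (am i2 * am i1) * (ap i1))"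
proof (rule poly_mapping_eqI)
  fix k :: word
  have b1: "\<beta> - 1 \<noteq> 0" using assms by simp
  have b2: "1 + \<beta>*\<beta> \<noteq> \<beta>*2"
  proof
    assume h: "1 + \<beta>*\<beta> = \<beta>*2"
    have "(\<beta>-1)*(\<beta>-1) = 0" using h by algebra
    then show False using b1 by simp
  qed
  have b3: "\<beta> + \<beta>*(\<beta>*\<beta>) \<noteq> \<beta>*(\<beta>*2)"
  proof
    assume h: "\<beta> + \<beta>*(\<beta>*\<beta>) = \<beta>*(\<beta>*2)"
    have "\<beta>*((\<beta>-1)*(\<beta>-1)) = 0" using h by algebra
    then show False using b1 assms by simp
  qed
  show "Poly_Mapping.lookup (commut (Nop \<beta> i2) (am i2) - (- am i2)) k = Poly_Mapping.lookup (((sc (-(\<beta>/(\<beta>-1)))) * (E \<beta>) * (am i2)) + ((sc ((\<beta>/(\<beta>-1))*\<beta>) * ap i1) * (am i1 * am i2) * (1)) + ((sc ((\<beta>/(\<beta>-1))*\<beta>) * ap i2) * (am i2 * am i2) * (1)) + ((sc ((\<beta>/(\<beta>-1))/\<beta>) * am i2) * (E \<beta>) * (1)) + ((sc (-(\<beta>/(\<beta>-1))/\<beta>)) * (am i2 * am i1) * (ap i1)) + ((sc (-(\<beta>/(\<beta>-1))/\<beta>)) * (am i2 * am i2) * (ap i2)) + ((sc (-(\<beta>/(\<beta>-1))) * ap i1) * (am i1 * am i2) * (1)) + ((sc ((\<beta>/(\<beta>-1)))) * (am i2 * am i1) * (ap i1))) k"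
    apply (cases k rule: word_cases)
    apply (simp_all add: unf E_def lookup_add lookup_minus lookup_single_W lookup_one)
    apply (auto simp: G_def)?
    apply (simp_all add: divide_simps b1 b2 b3 assms algebra_simps)?
    done
qed

lemma c7:
  assumes "\<beta> \<noteq> 0" "\<beta> \<noteq> 1"
  shows "eqQ \<beta> (commut (Nop \<beta> i2) (am i2)) (- am i2)"
  unfolding eqQ_def c7_eq[OF assms]
  by (intro two_sided_ideal.add two_sided_ideal.gen rels_mem)

lemma c8_eq:
  assumes "\<beta> \<noteq> 0" "\<beta> \<noteq> 1"
  shows "commut (Nop \<beta> i2) (ap i2) - (ap i2) = ((sc (-(\<beta>/(\<beta>-1))/\<beta>)) * (E \<beta>) * (ap i2)) + ((sc ((\<beta>/(\<beta>-1))/\<beta>) * am i1) * (ap i1 * ap i2) * (1)) + ((sc ((\<beta>/(\<beta>-1))/\<beta>) * am i2) * (ap i2 * ap i2) * (1)) + ((sc ((\<beta>/(\<beta>-1))) * ap i2) * (E \<beta>) * (1)) + ((sc (-(\<beta>/(\<beta>-1))*\<beta>)) * (ap i2 * ap i1) * (am i1)) + ((sc (-(\<beta>/(\<beta>-1))*\<beta>)) * (ap i2 * ap i2) * (am i2)) + ((sc (-(\<beta>/(\<beta>-1))) * am i1) * (ap i1 * ap i2) * (1)) + ((sc ((\<beta>/(\<beta>-1)))) * (ap i2 * ap i1) * (am i1))"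
proof (rule poly_mapping_eqI)
  fix k :: word
  have b1: "\<beta> - 1 \<noteq> 0" using assms by simp
  have b2: "1 + \<beta>*\<beta> \<noteq> \<beta>*2"
  proof
    assume h: "1 + \<beta>*\<beta> = \<beta>*2"
    have "(\<beta>-1)*(\<beta>-1) = 0" using h by algebra
    then show False using b1 by simp
  qed
  have b3: "\<beta> + \<beta>*(\<beta>*\<beta>) \<noteq> \<beta>*(\<beta>*2)"
  proof
    assume h: "\<beta> + \<beta>*(\<beta>*\<beta>) = \<beta>*(\<beta>*2)"
    have "\<beta>*((\<beta>-1)*(\<beta>-1)) = 0" using h by algebra
    then show False using b1 assms by simp
  qed
  show "Poly_Mapping.lookup (commut (Nop \<beta> i2) (ap i2) - (ap i2)) k = Poly_Mapping.lookup (((sc (-(\<beta>/(\<beta>-1))/\<beta>)) * (E \<beta>) * (ap i2)) + ((sc ((\<beta>/(\<beta>-1))/\<beta>) * am i1) * (ap i1 * ap i2) * (1)) + ((sc ((\<beta>/(\<beta>-1))/\<beta>) * am i2) * (ap i2 * ap i2) * (1)) + ((sc ((\<beta>/(\<beta>-1))) * ap i2) * (E \<beta>) * (1)) + ((sc (-(\<beta>/(\<beta>-1))*\<beta>)) * (ap i2 * ap i1) * (am i1)) + ((sc (-(\<beta>/(\<beta>-1))*\<beta>)) * (ap i2 * ap i2) * (am i2)) + ((sc (-(\<beta>/(\<beta>-1))) * am i1) * (ap i1 * ap i2) * (1)) + ((sc ((\<beta>/(\<beta>-1)))) * (ap i2 * ap i1) * (am i1))) k"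
    apply (cases k rule: word_cases)
    apply (simp_all add: unf E_def lookup_add lookup_minus lookup_single_W lookup_one)
    apply (auto simp: G_def)?
    apply (simp_all add: divide_simps b1 b2 b3 assms algebra_simps)?
    done
qed

lemma c8:
  assumes "\<beta> \<noteq> 0" "\<beta> \<noteq> 1"
  shows "eqQ \<beta> (commut (Nop \<beta> i2) (ap i2)) (ap i2)"
  unfolding eqQ_def c8_eq[OF assms]
  by (intro two_sided_ideal.add two_sided_ideal.gen rels_mem)


theorem mainTheorem1:
  fixes \<beta> :: complex
  assumes "\<beta> \<noteq> 0" and "\<beta> \<noteq> 1"
  shows "(\<forall>i j. eqQ \<beta> (commut (Nop \<beta> i) (am j)) (- (if i = j then am j else 0))
              \<and> eqQ \<beta> (commut (Nop \<beta> i) (ap j)) (if i = j then ap j else 0))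
         \<and> (\<forall>x. x \<in> two_sided_ideal (rels \<beta>) \<longrightarrow> fswap x \<in> two_sided_ideal (rels \<beta>))"
proof (intro conjI allI impI)
  fix i j
  show "eqQ \<beta> (commut (Nop \<beta> i) (am j)) (- (if i = j then am j else 0))"
    using c1[OF assms] c3[OF assms] c5[OF assms] c7[OF assms]
    by (cases i; cases j) simp_all
  show "eqQ \<beta> (commut (Nop \<beta> i) (ap j)) (if i = j then ap j else 0)"
    using c2[OF assms] c4[OF assms] c6[OF assms] c8[OF assms]
    by (cases i; cases j) simp_all
next
  fix x assume "x \<in> two_sided_ideal (rels \<beta>)"
  then show "fswap x \<in> two_sided_ideal (rels \<beta>)" by (rule fswap_ideal)
qed

end
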